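(* Let $(\mathcal A,\phi)$ be a noncommutative probability space and let $B,C\subseteq\mathcal A$ have the cluster property. Then for all $j>0$, $k>0$, $b_1,\dots,b_j\in B$ and $c_1,\dots,c_k\in C$, $$\kappa_{j+k}[b_1,\dots,b_j,c_1,\dots,c_k]=0.$$
   Context: A noncommutative probability space is a pair $(\mathcal A,\phi)$ with $\mathcal A$ a unital algebra over $\mathbb{C}$ and $\phi$ a linear form on $\mathcal A$ with $\phi(1)=1$. Two subsets $B,C\subseteq\mathcal A$ have the cluster property if $\phi(b_1\cdots b_jc_1\cdots c_k)=\phi(b_1\cdots b_j)\,\phi(c_1\cdots c_k)$ for all $b_1,\dots,b_j\in B$ and $c_1,\dots,c_k\in C$. A reduced plane tree is a rooted plane tree in which every internal node has at least two children; its weight is its number of leaves minus 1, and $i(t)$ is its number of internal nodes. It is prime if it has at least two leaves and the rightmost child of its root is a leaf; $\mathrm{PST}_n$ is the set of prime reduced plane trees of weight $n$. For $t$ with leaves $\ell_1,\dots,\ell_{n+1}$ from left to right, an internal vertex $v$ has a clear view to the $i$th sector ($1\le i\le n$), written $v\measuredangle i$, iff $v$ is the lowest common ancestor of $\ell_i$ and $\ell_{i+1}$. For $a_1,\dots,a_n\in\mathcal A$, $$\kappa_n[a_1,\dots,a_n]=\sum_{t\in\mathrm{PST}_n}(-1)^{i(t)-1}\prod_{v\text{ internal vertex of }t}\phi\Big(\prod_{v\measuredangle i}a_i\Big),$$ where the inner product is taken in increasing order of $i$. *)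

theory Defs
  imports Complex_Main
begin

definition unital_C_algebra :: "(complex \<Rightarrow> 'a::ring_1 \<Rightarrow> 'a) \<Rightarrow> bool" where
  "unital_C_algebra scale \<longleftrightarrow>
     vector_space scale \<and>
     (\<forall>c x y. scale c (x * y) = scale c x * y) \<and>
     (\<forall>c x y. scale c (x * y) = x * scale c y)"

definition nc_prob_space :: "(complex \<Rightarrow> 'a::ring_1 \<Rightarrow> 'a) \<Rightarrow> ('a \<Rightarrow> complex) \<Rightarrow> bool" where
  "nc_prob_space scale phi \<longleftrightarrow>
     unital_C_algebra scale \<and> Vector_Spaces.linear scale (*) phi \<and> phi 1 = 1"

definition cluster_property :: "('a::ring_1 \<Rightarrow> complex) \<Rightarrow> 'a set \<Rightarrow> 'a set \<Rightarrow> bool" where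
  "cluster_property phi B C \<longleftrightarrow>
     (\<forall>bs cs. set bs \<subseteq> B \<longrightarrow> set cs \<subseteq> C \<longrightarrow>
        phi (prod_list bs * prod_list cs) = phi (prod_list bs) * phi (prod_list cs))"

datatype ptree = Leaf | Node "ptree list"

fun reduced :: "ptree \<Rightarrow> bool" where
  "reduced Leaf = True"
| "reduced (Node ts) = (length ts \<ge> 2 \<and> (\<forall>t\<in>set ts. reduced t))"

fun num_leaves :: "ptree \<Rightarrow> nat" where
  "num_leaves Leaf = 1"
| "num_leaves (Node ts) = sum_list (map num_leaves ts)"

fun num_internal :: "ptree \<Rightarrow> nat" where
  "num_internal Leaf = 0"
| "num_internal (Node ts) = 1 + sum_list (map num_internal ts)"

definition weight :: "ptree \<Rightarrow> nat" where
  "weight t = num_leaves t - 1"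

definition prime_tree :: "ptree \<Rightarrow> bool" where
  "prime_tree t \<longleftrightarrow> num_leaves t \<ge> 2 \<and>
     (case t of Leaf \<Rightarrow> False | Node ts \<Rightarrow> ts \<noteq> [] \<and> last ts = Leaf)"

definition PST :: "nat \<Rightarrow> ptree set" where
  "PST n = {t. reduced t \<and> prime_tree t \<and> weight t = n}"

text \<open>Vertices are addressed by paths (lists of child indices) from the root.\<close>

fun subtree_at :: "ptree \<Rightarrow> nat list \<Rightarrow> ptree option" where
  "subtree_at t [] = Some t"
| "subtree_at Leaf (i # p) = None"
| "subtree_at (Node ts) (i # p) = (if i < length ts then subtree_at (ts ! i) p else None)"

definition internal_vertices :: "ptree \<Rightarrow> nat list set" where
  "internal_vertices t = {p. \<exists>ts. subtree_at t p = Some (Node ts)}"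

function (sequential) leaf_paths :: "ptree \<Rightarrow> nat list list" where
  "leaf_paths Leaf = [[]]"
| "leaf_paths (Node ts) =
     concat (map (\<lambda>(i, s). map (Cons i) (leaf_paths s)) (zip [0..<length ts] ts))"
  by pat_completeness auto
termination
  by (relation "measure size") (auto dest!: set_zip_rightD simp: less_Suc_eq_le intro: size_list_estimation')

text \<open>Lowest common ancestor of two vertices = longest common prefix of their paths.\<close>
fun lcp :: "nat list \<Rightarrow> nat list \<Rightarrow> nat list" where
  "lcp (x # xs) (y # ys) = (if x = y then x # lcp xs ys else [])"
| "lcp _ _ = []"

text \<open>Vertex v has a clear view to sector i (1 \<le> i \<le> n) iff it is the lowest common ancestor
  of leaves l_i and l_(i+1) (leaves numbered from 1).\<close>
definition clear_view :: "ptree \<Rightarrow> nat list \<Rightarrow> nat \<Rightarrow> bool" where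
  "clear_view t v i \<longleftrightarrow> lcp (leaf_paths t ! (i - 1)) (leaf_paths t ! i) = v"

text \<open>Free cumulant kappa_n[a_1,...,a_n], with a_i = as ! (i - 1) and n = length as.\<close>
definition kappa :: "('a::ring_1 \<Rightarrow> complex) \<Rightarrow> 'a list \<Rightarrow> complex" where
  "kappa phi as =
     (let n = length as in
      \<Sum>t\<in>PST n. (-1) ^ (num_internal t - 1) *
        (\<Prod>v\<in>internal_vertices t.
           phi (prod_list (map (\<lambda>i. as ! (i - 1)) (filter (clear_view t v) [1..<n+1])))))"

end

theory Submission
  imports Defs
begin


abbreviation nls :: "ptree list \<Rightarrow> nat" where "nls ts \<equiv> sum_list (map num_leaves ts)"

fun dec :: "nat \<Rightarrow> ptree list \<Rightarrow> ptree list \<times> ptree \<times> ptree list \<times> nat" where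
  "dec j [] = ([], Leaf, [], 0)"
| "dec j (t # ts) = (if j < num_leaves t then ([], t, ts, j)
     else (case dec (j - num_leaves t) ts of (L, s, R, j') \<Rightarrow> (t # L, s, R, j')))"

definition "decL j ts = fst (dec j ts)"
definition "decS j ts = fst (snd (dec j ts))"
definition "decR j ts = fst (snd (snd (dec j ts)))"
definition "decJ j ts = snd (snd (snd (dec j ts)))"

lemma dec_spec:
  "j < nls ts \<Longrightarrow> ts = decL j ts @ decS j ts # decR j ts \<and> j = nls (decL j ts) + decJ j ts
     \<and> decJ j ts < num_leaves (decS j ts)"
proof (induction ts arbitrary: j)
  case Nil then show ?case by simp
next
  case (Cons t ts)
  show ?case
  proof (cases "j < num_leaves t")
    case True then show ?thesis by (simp add: decL_def decS_def decR_def decJ_def)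
  next
    case False
    then have "j - num_leaves t < nls ts" using Cons.prems by simp
    from Cons.IH[OF this] False show ?thesis
      by (auto simp: decL_def decS_def decR_def decJ_def split: prod.splits)
  qed
qed

lemma dec_app:
  "nls L \<le> j \<Longrightarrow> j < nls L + num_leaves s \<Longrightarrow> dec j (L @ s # R) = (L, s, R, j - nls L)"
  by (induction L arbitrary: j) auto

lemma dec_app':
  assumes "nls L \<le> j" "j < nls L + num_leaves s"
  shows "decL j (L @ s # R) = L" "decS j (L @ s # R) = s" "decR j (L @ s # R) = R"
    "decJ j (L @ s # R) = j - nls L"
  using dec_app[OF assms, of R] by (simp_all add: decL_def decS_def decR_def decJ_def)

lemma decS_mem: "decS j ts \<in> set ts \<or> decS j ts = Leaf"
proof (induction ts arbitrary: j)
  case Nil then show ?case by (simp add: decS_def)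
next
  case (Cons t ts)
  have "decS j (t # ts) = (if j < num_leaves t then t else decS (j - num_leaves t) ts)"
    by (simp add: decS_def split: prod.splits)
  then show ?case using Cons.IH[of "j - num_leaves t"] by auto
qed

lemma decS_size: "size (decS j ts) < Suc (size_list size ts)"
proof (cases "decS j ts = Leaf")
  case True then show ?thesis by simp
next
  case False
  then have "decS j ts \<in> set ts" using decS_mem by blast
  then have "size (decS j ts) \<le> size_list size ts" by (rule size_list_estimation') simp
  then show ?thesis by simp
qed

fun kids :: "ptree \<Rightarrow> ptree list" where
  "kids Leaf = []" | "kids (Node ts) = ts"

definition "mixed j ts \<longleftrightarrow> decL j ts \<noteq> [] \<and> decR j ts \<noteq> []"
definition "splitn j ts = Node (Node (decL j ts @ [decS j ts]) # decR j ts)"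
definition "canmerge j ts \<longleftrightarrow> decL j ts = [] \<and> decR j ts \<noteq> [] \<and> decS j ts \<noteq> Leaf
             \<and> decR (decJ j ts) (kids (decS j ts)) = []"
definition "mergen j ts = Node (decL (decJ j ts) (kids (decS j ts)) @ decS (decJ j ts) (kids (decS j ts)) # decR j ts)"

definition "step j ts r = (if mixed j ts then splitn j ts
     else if canmerge j ts then mergen j ts
     else if decJ j ts = 0 then Node ts
     else Node (decL j ts @ r # decR j ts))"

fun swf :: "nat \<Rightarrow> nat \<Rightarrow> ptree \<Rightarrow> ptree" where
  "swf 0 j t = t"
| "swf (Suc n) j Leaf = Leaf"
| "swf (Suc n) j (Node ts) = step j ts (swf n (decJ j ts) (decS j ts))"

lemma swf_indep: "size t < n \<Longrightarrow> size t < m \<Longrightarrow> swf n j t = swf m j t"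
proof (induction n arbitrary: m j t)
  case 0 then show ?case by simp
next
  case (Suc n)
  from Suc.prems(2) obtain m' where m: "m = Suc m'" by (cases m) auto
  show ?case
  proof (cases t)
    case Leaf then show ?thesis by (simp add: m)
  next
    case (Node ts)
    have st: "size t = Suc (size_list size ts)" using Node by simp
    have "size (decS j ts) < n" "size (decS j ts) < m'"
      using Suc.prems st m decS_size[of j ts] by linarith+
    then have "swf n (decJ j ts) (decS j ts) = swf m' (decJ j ts) (decS j ts)"
      by (rule Suc.IH)
    then show ?thesis unfolding Node m swf.simps by (rule arg_cong)
  qed
qed

definition sw :: "nat \<Rightarrow> ptree \<Rightarrow> ptree" where "sw j t = swf (Suc (size t)) j t"

lemma sw_Leaf[simp]: "sw j Leaf = Leaf" by (simp add: sw_def)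
lemma sw_Node: "sw j (Node ts) = step j ts (sw (decJ j ts) (decS j ts))"
proof -
  have "swf (Suc (size_list size ts)) (decJ j ts) (decS j ts) = swf (Suc (size (decS j ts))) (decJ j ts) (decS j ts)"
    using decS_size[of j ts] by (intro swf_indep) auto
  then show ?thesis by (simp add: sw_def)
qed



lemma sum_ge_len: "(\<forall>t\<in>set ts. 0 < f t) \<Longrightarrow> length ts \<le> sum_list (map f ts)"
  by (induction ts) auto

lemma nl_pos: "reduced t \<Longrightarrow> 0 < num_leaves t"
proof (induction t)
  case Leaf then show ?case by simp
next
  case (Node ts)
  have "length ts \<le> nls ts"
  proof (intro sum_ge_len ballI)
    fix x assume x: "x \<in> set ts"
    then have "reduced x" using Node.prems by simp
    then show "0 < num_leaves x" using Node.IH[OF x] by blast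
  qed
  then show ?case using Node.prems by simp
qed

lemma nl_node2: "reduced (Node ts) \<Longrightarrow> 2 \<le> nls ts"
proof -
  assume r: "reduced (Node ts)"
  then have "length ts \<le> nls ts" by (intro sum_ge_len) (auto simp: nl_pos)
  then show ?thesis using r by simp
qed

lemma decomp:
  assumes "j < nls ts"
  obtains L s R j' where "decL j ts = L" "decS j ts = s" "decR j ts = R" "decJ j ts = j'"
    "ts = L @ s # R" "j = nls L + j'" "j' < num_leaves s"
  using dec_spec[OF assms] by blast

lemma step_eq:
  assumes "decL j ts = L" "decS j ts = s" "decR j ts = R" "decJ j ts = j'"
  shows "step j ts r = (if L \<noteq> [] \<and> R \<noteq> [] then Node (Node (L @ [s]) # R)
     else if L = [] \<and> R \<noteq> [] \<and> s \<noteq> Leaf \<and> decR j' (kids s) = []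
       then Node (decL j' (kids s) @ decS j' (kids s) # R)
     else if j' = 0 then Node ts
     else Node (L @ r # R))"
  using assms by (simp add: step_def mixed_def splitn_def canmerge_def mergen_def)

lemma sw_basic:
  "reduced t \<Longrightarrow> 1 \<le> j \<Longrightarrow> j < num_leaves t \<Longrightarrow>
     reduced (sw j t) \<and> num_leaves (sw j t) = num_leaves t \<and> decR j (kids (sw j t)) = decR j (kids t)"
proof (induction t arbitrary: j rule: measure_induct_rule[of size])
  case (less t)
  show ?case
  proof (cases t)
    case Leaf then show ?thesis using less.prems by simp
  next
    case (Node ts)
    have jl: "j < nls ts" using less.prems Node by simp
    obtain L s R j' where d: "decL j ts = L" "decS j ts = s" "decR j ts = R" "decJ j ts = j'"
      and sp: "ts = L @ s # R" "j = nls L + j'" "j' < num_leaves s"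
      using decomp[OF jl] by blast
    have rts: "length ts \<ge> 2" "\<forall>x\<in>set ts. reduced x" using less.prems Node by auto
    have rs: "reduced s" using rts sp by auto
    have sw: "sw j t = step j ts (sw j' s)" using Node d by (simp add: sw_Node)
    show ?thesis
    proof (cases "L \<noteq> [] \<and> R \<noteq> []")
      case True
      then have e: "sw j t = Node (Node (L @ [s]) # R)" using sw step_eq[OF d] by simp
      have "decR j (Node (L @ [s]) # R) = R"
        using dec_app'(3)[of "[]" j "Node (L @ [s])" R] sp by simp
      then show ?thesis using e True rts sp Node d
        by (auto simp: Suc_le_eq)
    next
      case nm: False
      show ?thesis
      proof (cases "L = [] \<and> R \<noteq> [] \<and> s \<noteq> Leaf \<and> decR j' (kids s) = []")
        case True
        then obtain ss where ss: "s = Node ss" by (cases s) auto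
        have jl2: "j' < nls ss" using sp ss by simp
        obtain L2 s2 R2 j2 where d2: "decL j' ss = L2" "decS j' ss = s2" "decR j' ss = R2" "decJ j' ss = j2"
          and sp2: "ss = L2 @ s2 # R2" "j' = nls L2 + j2" "j2 < num_leaves s2"
          using decomp[OF jl2] by blast
        have R2: "R2 = []" using True ss d2 by simp
        have e: "sw j t = Node (L2 @ s2 # R)" using sw step_eq[OF d] True ss d2 by simp
        have rss: "reduced (Node ss)" using rs ss by simp
        have "decR j (L2 @ s2 # R) = R"
          using dec_app'(3)[of L2 j s2 R] sp sp2 True by simp
        then show ?thesis using e True rts sp Node d sp2 R2 rss ss
          by auto
      next
        case nmg: False
        show ?thesis
        proof (cases "j' = 0")
          case True
          have "sw j t = Node ts" using sw step_eq[OF d] nm nmg True by auto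
          then show ?thesis using less.prems Node by simp
        next
          case False
          have e: "sw j t = Node (L @ sw j' s # R)" using sw step_eq[OF d] nm nmg False by simp
          have "size s < size t" using Node d decS_size[of j ts] by simp
          then have IH: "reduced (sw j' s) \<and> num_leaves (sw j' s) = num_leaves s"
            using less.IH[of s j'] rs False sp by simp
          have "decR j (L @ sw j' s # R) = R"
            using dec_app'(3)[of L j "sw j' s" R] sp IH by simp
          then show ?thesis using e IH rts sp Node d by auto
        qed
      qed
    qed
  qed
qed



lemma nonleaf: "1 \<le> j \<Longrightarrow> j < num_leaves s \<Longrightarrow> s \<noteq> Leaf"
  by (cases s) auto

lemma sw_invol:
  "reduced t \<Longrightarrow> 1 \<le> j \<Longrightarrow> j < num_leaves t \<Longrightarrow> sw j (sw j t) = t"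
proof (induction t arbitrary: j rule: measure_induct_rule[of size])
  case (less t)
  show ?case
  proof (cases t)
    case Leaf then show ?thesis using less.prems by simp
  next
    case (Node ts)
    have jl: "j < nls ts" using less.prems Node by simp
    obtain L s R j' where d: "decL j ts = L" "decS j ts = s" "decR j ts = R" "decJ j ts = j'"
      and sp: "ts = L @ s # R" "j = nls L + j'" "j' < num_leaves s"
      using decomp[OF jl] by blast
    have rts: "length ts \<ge> 2" "\<forall>x\<in>set ts. reduced x" using less.prems Node by auto
    have rs: "reduced s" using rts sp by auto
    have sw: "sw j t = step j ts (sw j' s)" using Node d by (simp add: sw_Node)
    show ?thesis
    proof (cases "L \<noteq> [] \<and> R \<noteq> []")
      case True
      then have e: "sw j t = Node (Node (L @ [s]) # R)" using sw step_eq[OF d] by simp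
      have d': "decL j (Node (L @ [s]) # R) = []" "decS j (Node (L @ [s]) # R) = Node (L @ [s])"
        "decR j (Node (L @ [s]) # R) = R" "decJ j (Node (L @ [s]) # R) = j"
        using dec_app'[of "[]" j "Node (L @ [s])" R] sp by simp_all
      have d'': "decL j (L @ [s]) = L" "decS j (L @ [s]) = s" "decR j (L @ [s]) = []"
        using dec_app'[of L j s "[]"] sp by simp_all
      show ?thesis unfolding e sw_Node step_eq[OF d'] using True d'' sp Node by simp
    next
      case nm: False
      show ?thesis
      proof (cases "L = [] \<and> R \<noteq> [] \<and> s \<noteq> Leaf \<and> decR j' (kids s) = []")
        case True
        then obtain ss where ss: "s = Node ss" by (cases s) auto
        have jl2: "j' < nls ss" using sp ss by simp
        obtain L2 s2 R2 j2 where d2: "decL j' ss = L2" "decS j' ss = s2" "decR j' ss = R2" "decJ j' ss = j2"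
          and sp2: "ss = L2 @ s2 # R2" "j' = nls L2 + j2" "j2 < num_leaves s2"
          using decomp[OF jl2] by blast
        have R2: "R2 = []" using True ss d2 by simp
        have e: "sw j t = Node (L2 @ s2 # R)" using sw step_eq[OF d] True ss d2 by simp
        have L2: "L2 \<noteq> []" using rs ss sp2 R2 by auto
        have d': "decL j (L2 @ s2 # R) = L2" "decS j (L2 @ s2 # R) = s2"
          "decR j (L2 @ s2 # R) = R" "decJ j (L2 @ s2 # R) = j2"
          using dec_app'[of L2 j s2 R] sp sp2 True by simp_all
        show ?thesis unfolding e sw_Node step_eq[OF d'] using True L2 sp sp2 R2 ss Node by simp
      next
        case nmg: False
        show ?thesis
        proof (cases "j' = 0")
          case True
          have "sw j t = Node ts" using sw step_eq[OF d] nm nmg True by auto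
          then show ?thesis using Node by simp
        next
          case False
          have e: "sw j t = Node (L @ sw j' s # R)" using sw step_eq[OF d] nm nmg False by simp
          have "size s < size t" using Node d decS_size[of j ts] by simp
          then have IH: "sw j' (sw j' s) = s"
            using less.IH[of s j'] rs False sp by simp
          have B: "reduced (sw j' s) \<and> num_leaves (sw j' s) = num_leaves s \<and> decR j' (kids (sw j' s)) = decR j' (kids s)"
            using sw_basic[of s j'] rs False sp by simp
          have d': "decL j (L @ sw j' s # R) = L" "decS j (L @ sw j' s # R) = sw j' s"
            "decR j (L @ sw j' s # R) = R" "decJ j (L @ sw j' s # R) = j'"
            using dec_app'[of L j "sw j' s" R] sp B by simp_all
          have nl1: "sw j' s \<noteq> Leaf" "s \<noteq> Leaf" using nonleaf[of j'] False sp B by auto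
          have "sw j (sw j t) = Node (L @ sw j' (sw j' s) # R)"
            unfolding e sw_Node step_eq[OF d'] d' using nm nmg False B nl1 by auto
          then show ?thesis using IH sp Node by simp
        qed
      qed
    qed
  qed
qed

lemma sw_sign:
  "reduced t \<Longrightarrow> 1 \<le> j \<Longrightarrow> j < num_leaves t \<Longrightarrow> decR j (kids t) \<noteq> [] \<Longrightarrow>
     num_internal (sw j t) = Suc (num_internal t) \<or> Suc (num_internal (sw j t)) = num_internal t"
proof (induction t arbitrary: j rule: measure_induct_rule[of size])
  case (less t)
  show ?case
  proof (cases t)
    case Leaf then show ?thesis using less.prems by simp
  next
    case (Node ts)
    have jl: "j < nls ts" using less.prems Node by simp
    obtain L s R j' where d: "decL j ts = L" "decS j ts = s" "decR j ts = R" "decJ j ts = j'"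
      and sp: "ts = L @ s # R" "j = nls L + j'" "j' < num_leaves s"
      using decomp[OF jl] by blast
    have rts: "length ts \<ge> 2" "\<forall>x\<in>set ts. reduced x" using less.prems Node by auto
    have rs: "reduced s" using rts sp by auto
    have Rne: "R \<noteq> []" using less.prems Node d by simp
    have sw: "sw j t = step j ts (sw j' s)" using Node d by (simp add: sw_Node)
    show ?thesis
    proof (cases "L \<noteq> [] \<and> R \<noteq> []")
      case True
      then have e: "sw j t = Node (Node (L @ [s]) # R)" using sw step_eq[OF d] by simp
      show ?thesis unfolding e using Node sp by simp
    next
      case nm: False
      then have L: "L = []" using Rne by simp
      then have j': "j' = j" using sp by simp
      show ?thesis
      proof (cases "s \<noteq> Leaf \<and> decR j' (kids s) = []")
        case True
        then obtain ss where ss: "s = Node ss" by (cases s) auto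
        have jl2: "j' < nls ss" using sp ss by simp
        obtain L2 s2 R2 j2 where d2: "decL j' ss = L2" "decS j' ss = s2" "decR j' ss = R2" "decJ j' ss = j2"
          and sp2: "ss = L2 @ s2 # R2" "j' = nls L2 + j2" "j2 < num_leaves s2"
          using decomp[OF jl2] by blast
        have R2: "R2 = []" using True ss d2 by simp
        have e: "sw j t = Node (L2 @ s2 # R)" using sw step_eq[OF d] True ss d2 L Rne by simp
        show ?thesis unfolding e using Node sp sp2 R2 ss L by simp
      next
        case nmg: False
        have j'0: "j' \<noteq> 0" using j' less.prems by simp
        have e: "sw j t = Node (L @ sw j' s # R)" using sw step_eq[OF d] nm nmg j'0 by auto
        have "size s < size t" using Node d decS_size[of j ts] by simp
        moreover have "s \<noteq> Leaf" using nonleaf[of j' s] j'0 sp by simp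
        ultimately have IH: "num_internal (sw j' s) = Suc (num_internal s) \<or> Suc (num_internal (sw j' s)) = num_internal s"
          using less.IH[of s j'] rs j'0 sp nmg by (cases s) auto
        show ?thesis unfolding e using Node sp IH by auto
      qed
    qed
  qed
qed



definition offs :: "ptree list \<Rightarrow> nat \<Rightarrow> nat" where "offs ts i = nls (take i ts)"

lemma offs_0[simp]: "offs ts 0 = 0" by (simp add: offs_def)
lemma offs_Cons_Suc[simp]: "offs (t # ts) (Suc i) = num_leaves t + offs ts i" by (simp add: offs_def)
lemma offs_Suc: "i < length ts \<Longrightarrow> offs ts (Suc i) = offs ts i + num_leaves (ts ! i)"
  by (simp add: offs_def take_Suc_conv_app_nth)
lemma offs_len: "offs ts (length ts) = nls ts" by (simp add: offs_def)

lemma offs_mono: "i \<le> i' \<Longrightarrow> offs ts i \<le> offs ts i'"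
proof -
  assume "i \<le> i'"
  then obtain d where "i' = i + d" by (metis le_add_diff_inverse)
  then show ?thesis by (simp add: offs_def take_add)
qed

lemma map_upt_take: "i \<le> length ts \<Longrightarrow> map (\<lambda>k. f (ts ! k)) [0..<i] = map f (take i ts)"
  by (rule nth_equalityI) auto

lemma map_zip_upt: "map (\<lambda>(i, s). g i s) (zip [0..<length ts] ts) = map (\<lambda>i. g i (ts ! i)) [0..<length ts]"
  by (rule nth_equalityI) auto

lemma lp_Node: "leaf_paths (Node ts) = concat (map (\<lambda>i. map (Cons i) (leaf_paths (ts ! i))) [0..<length ts])"
  by (simp add: map_zip_upt)

lemma lp_len: "length (leaf_paths t) = num_leaves t"
proof (induction t)
  case Leaf then show ?case by simp
next
  case (Node ts)
  have "length (leaf_paths (Node ts)) = sum_list (map (\<lambda>i. length (leaf_paths (ts ! i))) [0..<length ts])"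
    by (simp del: leaf_paths.simps add: lp_Node length_concat comp_def)
  also have "\<dots> = sum_list (map (\<lambda>i. num_leaves (ts ! i)) [0..<length ts])"
    using Node.IH by (intro arg_cong[where f=sum_list] map_cong) auto
  also have "\<dots> = nls ts" using map_upt_take[of "length ts" ts num_leaves] by simp
  finally show ?case by simp
qed

lemma concat_nth:
  "i < m \<Longrightarrow> r < length (f i) \<Longrightarrow>
    concat (map f [0..<m]) ! (sum_list (map (\<lambda>k. length (f k)) [0..<i]) + r) = f i ! r"
proof (induction m)
  case 0 then show ?case by simp
next
  case (Suc m)
  let ?g = "\<lambda>k. length (f k)"
  have lenA: "length (concat (map f [0..<m])) = sum_list (map ?g [0..<m])"
    by (simp add: length_concat comp_def)
  show ?case
  proof (cases "i < m")
    case True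
    have "sum_list (map ?g [0..<i]) + ?g i = sum ?g {0..<Suc i}"
      by (simp add: interv_sum_list_conv_sum_set_nat)
    also have "\<dots> \<le> sum ?g {0..<m}" using True by (intro sum_mono2) auto
    also have "\<dots> = sum_list (map ?g [0..<m])" by (simp add: interv_sum_list_conv_sum_set_nat)
    finally have "sum_list (map ?g [0..<i]) + r < length (concat (map f [0..<m]))"
      using Suc.prems lenA by simp
    then show ?thesis using Suc.IH[OF True Suc.prems(2)] by (simp add: nth_append)
  next
    case False
    then have "i = m" using Suc.prems by simp
    then show ?thesis using lenA by (simp add: nth_append)
  qed
qed

lemma lp_nth:
  assumes "i < length ts" "r < num_leaves (ts ! i)"
  shows "leaf_paths (Node ts) ! (offs ts i + r) = i # (leaf_paths (ts ! i) ! r)"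
proof -
  let ?f = "\<lambda>i. map (Cons i) (leaf_paths (ts ! i))"
  have "sum_list (map (\<lambda>k. length (?f k)) [0..<i]) = offs ts i"
    using map_upt_take[of i ts num_leaves] assms by (simp add: lp_len offs_def)
  then show ?thesis
    using concat_nth[of i "length ts" r ?f] assms by (simp del: leaf_paths.simps add: lp_Node lp_len)
qed

lemma locate: "k < nls ts \<Longrightarrow> \<exists>i r. i < length ts \<and> r < num_leaves (ts ! i) \<and> k = offs ts i + r"
proof (induction ts arbitrary: k)
  case Nil then show ?case by simp
next
  case (Cons t ts)
  show ?case
  proof (cases "k < num_leaves t")
    case True then show ?thesis by (intro exI[of _ 0] exI[of _ k]) simp
  next
    case False
    then have "k - num_leaves t < nls ts" using Cons.prems by simp
    then obtain i r where "i < length ts" "r < num_leaves (ts ! i)" "k - num_leaves t = offs ts i + r"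
      using Cons.IH by blast
    then show ?thesis using False by (intro exI[of _ "Suc i"] exI[of _ r]) simp
  qed
qed

lemma loc_unique:
  assumes "i < length ts" "i' < length ts" "r < num_leaves (ts ! i)" "r' < num_leaves (ts ! i')"
    "offs ts i + r = offs ts i' + r'"
  shows "i = i'"
proof (rule ccontr)
  assume ne: "i \<noteq> i'"
  { fix a b ra rb assume "a < b" "b < length ts" "ra < num_leaves (ts ! a)"
    then have "offs ts a + ra < offs ts b"
      using offs_Suc[of a ts] offs_mono[of "Suc a" b ts] by simp }
  note * = this
  show False
  proof (cases "i < i'")
    case True then show ?thesis using *[of i i' r] assms by simp
  next
    case False then have "i' < i" using ne by simp
    then show ?thesis using *[of i' i r'] assms by simp
  qed
qed

lemma IV_Node: "internal_vertices (Node ts) = insert [] (\<Union>i<length ts. Cons i ` internal_vertices (ts ! i))"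
proof (rule set_eqI)
  fix v show "v \<in> internal_vertices (Node ts) \<longleftrightarrow> v \<in> insert [] (\<Union>i<length ts. Cons i ` internal_vertices (ts ! i))"
    by (cases v) (auto simp: internal_vertices_def)
qed

lemma IV_Leaf: "internal_vertices Leaf = {}"
proof -
  { fix v have "v \<notin> internal_vertices Leaf" by (cases v) (auto simp: internal_vertices_def) }
  then show ?thesis by blast
qed

lemma IV_finite: "finite (internal_vertices t)"
proof (induction t)
  case Leaf then show ?case by (simp add: IV_Leaf)
next
  case (Node ts) then show ?case by (simp add: IV_Node)
qed



lemma cv_Node:
  assumes "i < length ts" "r < num_leaves (ts ! i)" "k - 1 = offs ts i + r"
    "i' < length ts" "r' < num_leaves (ts ! i')" "k = offs ts i' + r'" "1 \<le> k"
  shows "clear_view (Node ts) v k \<longleftrightarrow> (if i = i' then (\<exists>p. v = i # p \<and> clear_view (ts ! i) p r') else v = [])"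
proof -
  have a: "leaf_paths (Node ts) ! (k - 1) = i # leaf_paths (ts ! i) ! r"
    using lp_nth[OF assms(1,2)] assms(3) by simp
  have b: "leaf_paths (Node ts) ! k = i' # leaf_paths (ts ! i') ! r'"
    using lp_nth[OF assms(4,5)] assms(6) by simp
  show ?thesis
  proof (cases "i = i'")
    case True
    then have "r' - 1 = r" using assms by simp
    then show ?thesis using True a b by (auto simp: clear_view_def)
  next
    case False
    then show ?thesis using a b by (auto simp: clear_view_def)
  qed
qed

fun bnd :: "ptree list \<Rightarrow> nat list" where
  "bnd [] = []"
| "bnd (t # ts) = (if ts = [] then [] else num_leaves t # map ((+) (num_leaves t)) (bnd ts))"

lemma set_bnd: "set (bnd ts) = offs ts ` {1..<length ts}"
proof (induction ts)
  case Nil then show ?case by simp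
next
  case (Cons t ts)
  show ?case
  proof (cases "ts = []")
    case True then show ?thesis by simp
  next
    case False
    have "offs (t # ts) ` {1..<length (t # ts)} = insert (num_leaves t) ((\<lambda>m. num_leaves t + offs ts m) ` {1..<length ts})"
    proof (rule set_eqI, rule iffI)
      fix y assume "y \<in> offs (t # ts) ` {1..<length (t # ts)}"
      then obtain x where x: "1 \<le> x" "x < Suc (length ts)" "y = offs (t # ts) x" by auto
      then obtain m where m: "x = Suc m" by (cases x) auto
      show "y \<in> insert (num_leaves t) ((\<lambda>m. num_leaves t + offs ts m) ` {1..<length ts})"
      proof (cases "m = 0")
        case True then show ?thesis using x m by simp
      next
        case False then show ?thesis using x m by auto
      qed
    next
      fix y assume "y \<in> insert (num_leaves t) ((\<lambda>m. num_leaves t + offs ts m) ` {1..<length ts})"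
      then consider "y = num_leaves t" | m where "1 \<le> m" "m < length ts" "y = num_leaves t + offs ts m" by auto
      then show "y \<in> offs (t # ts) ` {1..<length (t # ts)}"
      proof cases
        case 1
        show ?thesis
        proof (rule image_eqI[of y _ 1])
          show "y = offs (t # ts) 1" using 1 by simp
          show "1 \<in> {1..<length (t # ts)}" using False by simp
        qed
      next
        case (2 m)
        show ?thesis
        proof (rule image_eqI[of y _ "Suc m"])
          show "y = offs (t # ts) (Suc m)" using 2 by simp
          show "Suc m \<in> {1..<length (t # ts)}" using 2 by simp
        qed
      qed
    qed
    then show ?thesis using False Cons.IH by (simp add: image_image)
  qed
qed

lemma offs_pos: "\<forall>x\<in>set ts. reduced x \<Longrightarrow> 1 \<le> m \<Longrightarrow> m < length ts \<Longrightarrow> 0 < offs ts m"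
proof -
  assume r: "\<forall>x\<in>set ts. reduced x" and m: "1 \<le> m" "m < length ts"
  have "offs ts 1 \<le> offs ts m" using m by (intro offs_mono)
  moreover have "offs ts 1 = num_leaves (ts ! 0)" using offs_Suc[of 0 ts] m by (cases ts) auto
  moreover have "ts ! 0 \<in> set ts" using m by (intro nth_mem) linarith
  then have "0 < num_leaves (ts ! 0)" using r nl_pos by blast
  ultimately show ?thesis by simp
qed

lemma bnd_pos: "\<forall>x\<in>set ts. reduced x \<Longrightarrow> x \<in> set (bnd ts) \<Longrightarrow> 0 < x"
  using offs_pos by (auto simp: set_bnd)

lemma bnd_sorted: "\<forall>x\<in>set ts. reduced x \<Longrightarrow> sorted_wrt (<) (bnd ts)"
proof (induction ts)
  case Nil then show ?case by simp
next
  case (Cons t ts)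
  have "\<forall>x\<in>set ts. reduced x" using Cons.prems by simp
  then have "\<forall>x\<in>set (bnd ts). 0 < x" using bnd_pos by blast
  then show ?case using Cons by (simp add: sorted_wrt_map)
qed

lemma filter_root:
  assumes r: "\<forall>x\<in>set ts. reduced x"
  shows "filter (clear_view (Node ts) []) [1..<nls ts] = bnd ts"
proof (rule strict_sorted_equal)
  show "sorted_wrt (<) (bnd ts)" using bnd_sorted r .
  show "sorted_wrt (<) (filter (clear_view (Node ts) []) [1..<nls ts])"
    by (simp add: sorted_wrt_filter)
  have nlp: "\<And>m. m < length ts \<Longrightarrow> 0 < num_leaves (ts ! m)" using r nl_pos by simp
  show "set (filter (clear_view (Node ts) []) [1..<nls ts]) = set (bnd ts)"
  proof (rule set_eqI)
    fix k
    show "k \<in> set (filter (clear_view (Node ts) []) [1..<nls ts]) \<longleftrightarrow> k \<in> set (bnd ts)"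
    proof
      assume "k \<in> set (filter (clear_view (Node ts) []) [1..<nls ts])"
      then have k: "1 \<le> k" "k < nls ts" "clear_view (Node ts) [] k" by auto
      obtain i r where ir: "i < length ts" "r < num_leaves (ts ! i)" "k - 1 = offs ts i + r"
        using locate[of "k - 1" ts] k by (meson less_imp_diff_less)
      obtain i' r' where ir': "i' < length ts" "r' < num_leaves (ts ! i')" "k = offs ts i' + r'"
        using locate[of k ts] k by meson
      have ne: "i \<noteq> i'" using k(3) cv_Node[OF ir ir' k(1), of "[]"] by auto
      have r0: "r' = 0"
      proof (rule ccontr)
        assume "r' \<noteq> 0"
        then have "offs ts i + r = offs ts i' + (r' - 1)" using ir ir' by simp
        then have "i = i'" using loc_unique[of i ts i' r "r' - 1"] ir ir' by simp
        then show False using ne by simp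
      qed
      have "i' \<noteq> 0" using r0 ir' k by (cases i') auto
      then show "k \<in> set (bnd ts)" using r0 ir' by (auto simp: set_bnd)
    next
      assume "k \<in> set (bnd ts)"
      then obtain m where m: "1 \<le> m" "m < length ts" "k = offs ts m" by (auto simp: set_bnd)
      have k1: "1 \<le> k" using offs_pos[OF r m(1,2)] m by simp
      have "offs ts (Suc m) \<le> offs ts (length ts)" using m by (intro offs_mono) simp
      then have k2: "k < nls ts" using offs_Suc[of m ts] nlp[of m] m by (simp add: offs_len)
      obtain i r where ir: "i < length ts" "r < num_leaves (ts ! i)" "k - 1 = offs ts i + r"
        using locate[of "k - 1" ts] k2 by (meson less_imp_diff_less)
      obtain i' r' where ir': "i' < length ts" "r' < num_leaves (ts ! i')" "k = offs ts i' + r'"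
        using locate[of k ts] k2 by meson
      have "i' = m" using loc_unique[of m ts i' 0 r'] ir' m nlp by simp
      moreover have "i = m - 1"
      proof -
        have os: "offs ts m = offs ts (m - 1) + num_leaves (ts ! (m - 1))"
          using offs_Suc[of "m - 1" ts] m by simp
        have p: "0 < num_leaves (ts ! (m - 1))" using m by (intro nlp) simp
        have "offs ts (m - 1) + (num_leaves (ts ! (m - 1)) - 1) = offs ts i + r"
          using os ir m p by simp
        then show ?thesis using loc_unique[of "m - 1" ts i "num_leaves (ts ! (m - 1)) - 1" r] ir m p
          by simp
      qed
      ultimately have "i \<noteq> i'" using m by simp
      then have "clear_view (Node ts) [] k" using cv_Node[OF ir ir' k1, of "[]"] by simp
      then show "k \<in> set (filter (clear_view (Node ts) []) [1..<nls ts])" using k1 k2 by simp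
    qed
  qed
qed



lemma filter_child:
  assumes r: "\<forall>x\<in>set ts. reduced x" and c: "c < length ts"
  shows "filter (clear_view (Node ts) (c # p)) [1..<nls ts]
       = map ((+) (offs ts c)) (filter (clear_view (ts ! c) p) [1..<num_leaves (ts ! c)])"
proof (rule strict_sorted_equal)
  show "sorted_wrt (<) (map ((+) (offs ts c)) (filter (clear_view (ts ! c) p) [1..<num_leaves (ts ! c)]))"
    by (simp add: sorted_wrt_map sorted_wrt_filter)
  show "sorted_wrt (<) (filter (clear_view (Node ts) (c # p)) [1..<nls ts])"
    by (simp add: sorted_wrt_filter)
  show "set (filter (clear_view (Node ts) (c # p)) [1..<nls ts])
      = set (map ((+) (offs ts c)) (filter (clear_view (ts ! c) p) [1..<num_leaves (ts ! c)]))"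
  proof (rule set_eqI)
    fix k
    show "k \<in> set (filter (clear_view (Node ts) (c # p)) [1..<nls ts])
      \<longleftrightarrow> k \<in> set (map ((+) (offs ts c)) (filter (clear_view (ts ! c) p) [1..<num_leaves (ts ! c)]))"
    proof
      assume "k \<in> set (filter (clear_view (Node ts) (c # p)) [1..<nls ts])"
      then have k: "1 \<le> k" "k < nls ts" "clear_view (Node ts) (c # p) k" by auto
      obtain i r where ir: "i < length ts" "r < num_leaves (ts ! i)" "k - 1 = offs ts i + r"
        using locate[of "k - 1" ts] k by (meson less_imp_diff_less)
      obtain i' r' where ir': "i' < length ts" "r' < num_leaves (ts ! i')" "k = offs ts i' + r'"
        using locate[of k ts] k by meson
      have cv: "clear_view (Node ts) (c # p) k \<longleftrightarrow> (if i = i' then (\<exists>q. c # p = i # q \<and> clear_view (ts ! i) q r') else c # p = [])"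
        by (rule cv_Node[OF ir ir' k(1)])
      have ii: "i = i'" "c = i" "clear_view (ts ! c) p r'" using cv k(3) by (auto split: if_splits)
      have "r' = Suc r" using ir ir' ii k(1) by simp
      then show "k \<in> set (map ((+) (offs ts c)) (filter (clear_view (ts ! c) p) [1..<num_leaves (ts ! c)]))"
        using ii ir' by auto
    next
      assume "k \<in> set (map ((+) (offs ts c)) (filter (clear_view (ts ! c) p) [1..<num_leaves (ts ! c)]))"
      then obtain q where q: "1 \<le> q" "q < num_leaves (ts ! c)" "clear_view (ts ! c) p q" "k = offs ts c + q"
        by auto
      have k1: "1 \<le> k" using q by simp
      have "offs ts (Suc c) \<le> offs ts (length ts)" using c by (intro offs_mono) simp
      then have k2: "k < nls ts" using offs_Suc[of c ts] q c by (simp add: offs_len)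
      obtain i r where ir: "i < length ts" "r < num_leaves (ts ! i)" "k - 1 = offs ts i + r"
        using locate[of "k - 1" ts] k2 by (meson less_imp_diff_less)
      obtain i' r' where ir': "i' < length ts" "r' < num_leaves (ts ! i')" "k = offs ts i' + r'"
        using locate[of k ts] k2 by meson
      have i': "i' = c" using loc_unique[of c ts i' q r'] ir' q c by simp
      then have rr: "r' = q" using ir' q by simp
      have "offs ts c + (q - 1) = offs ts i + r" using ir q by simp
      then have i: "i = c" using loc_unique[of c ts i "q - 1" r] ir q c by simp
      have "clear_view (Node ts) (c # p) k" using cv_Node[OF ir ir' k1, of "c # p"] i i' rr q by simp
      then show "k \<in> set (filter (clear_view (Node ts) (c # p)) [1..<nls ts])" using k1 k2 by simp
    qed
  qed
qed

definition Wo :: "('a::ring_1 \<Rightarrow> complex) \<Rightarrow> (nat \<Rightarrow> 'a) \<Rightarrow> ptree \<Rightarrow> complex" where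
  "Wo phi a t = (\<Prod>v\<in>internal_vertices t. phi (prod_list (map a (filter (clear_view t v) [1..<num_leaves t]))))"

fun Wf :: "('a::ring_1 \<Rightarrow> complex) \<Rightarrow> (nat \<Rightarrow> 'a) \<Rightarrow> ptree list \<Rightarrow> complex" where
  "Wf phi a [] = 1"
| "Wf phi a (t # ts) = Wo phi a t * Wf phi (\<lambda>k. a (num_leaves t + k)) ts"

lemma Wf_prod: "Wf phi a ts = (\<Prod>c<length ts. Wo phi (\<lambda>r. a (offs ts c + r)) (ts ! c))"
proof (induction ts arbitrary: a)
  case Nil then show ?case by simp
next
  case (Cons t ts)
  show ?case
    by (simp add: Cons.IH prod.lessThan_Suc_shift add.assoc del: prod.lessThan_Suc)
qed

lemma Wo_Node:
  assumes r: "\<forall>x\<in>set ts. reduced x"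
  shows "Wo phi a (Node ts) = phi (prod_list (map a (bnd ts))) * Wf phi a ts"
proof -
  define F where "F v = phi (prod_list (map a (filter (clear_view (Node ts) v) [1..<nls ts])))" for v
  have "Wo phi a (Node ts) = prod F (internal_vertices (Node ts))" by (simp add: Wo_def F_def)
  also have "\<dots> = F [] * prod F (\<Union>c<length ts. Cons c ` internal_vertices (ts ! c))"
    unfolding IV_Node by (rule prod.insert) (auto simp: IV_finite)
  also have "prod F (\<Union>c<length ts. Cons c ` internal_vertices (ts ! c))
      = (\<Prod>c<length ts. prod F (Cons c ` internal_vertices (ts ! c)))"
    by (rule prod.UNION_disjoint) (auto simp: IV_finite)
  also have "\<dots> = (\<Prod>c<length ts. Wo phi (\<lambda>r. a (offs ts c + r)) (ts ! c))"
  proof (rule prod.cong[OF refl])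
    fix c assume c: "c \<in> {..<length ts}"
    have "prod F (Cons c ` internal_vertices (ts ! c)) = (\<Prod>p\<in>internal_vertices (ts ! c). F (c # p))"
      by (subst prod.reindex) (auto simp: inj_on_def)
    also have "\<dots> = Wo phi (\<lambda>r. a (offs ts c + r)) (ts ! c)"
      unfolding Wo_def F_def using filter_child[OF r, of c] c by (simp add: comp_def)
    finally show "prod F (Cons c ` internal_vertices (ts ! c)) = Wo phi (\<lambda>r. a (offs ts c + r)) (ts ! c)" .
  qed
  also have "F [] = phi (prod_list (map a (bnd ts)))" using filter_root[OF r] by (simp add: F_def)
  finally show ?thesis by (simp add: Wf_prod)
qed



lemma Wf_app: "Wf phi a (xs @ ys) = Wf phi a xs * Wf phi (\<lambda>k. a (nls xs + k)) ys"
  by (induction xs arbitrary: a) (simp_all add: add.assoc)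

lemma bnd_app: "xs \<noteq> [] \<Longrightarrow> ys \<noteq> [] \<Longrightarrow> bnd (xs @ ys) = bnd xs @ nls xs # map ((+) (nls xs)) (bnd ys)"
proof (induction xs)
  case Nil then show ?case by simp
next
  case (Cons x xs)
  show ?case
  proof (cases "xs = []")
    case True then show ?thesis using Cons.prems by simp
  next
    case False then show ?thesis using Cons by (simp add: add.assoc comp_def)
  qed
qed

lemma bnd_cong: "map num_leaves xs = map num_leaves ys \<Longrightarrow> bnd xs = bnd ys"
proof (induction xs arbitrary: ys)
  case Nil then show ?case by simp
next
  case (Cons x xs)
  then obtain y ys' where "ys = y # ys'" by (cases ys) auto
  then show ?case using Cons by auto
qed

lemma bnd_bound: "\<forall>x\<in>set ts. reduced x \<Longrightarrow> x \<in> set (bnd ts) \<Longrightarrow> 0 < x \<and> x < nls ts"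
proof -
  assume r: "\<forall>x\<in>set ts. reduced x" and x: "x \<in> set (bnd ts)"
  then obtain m where m: "1 \<le> m" "m < length ts" "x = offs ts m" by (auto simp: set_bnd)
  have "offs ts (Suc m) \<le> offs ts (length ts)" using m by (intro offs_mono) simp
  moreover have "ts ! m \<in> set ts" using m by simp
  then have "0 < num_leaves (ts ! m)" using r nl_pos by blast
  ultimately have "x < nls ts" using offs_Suc[of m ts] m by (simp add: offs_len)
  then show ?thesis using bnd_pos[OF r x] by simp
qed

lemma nls_pos: "\<forall>x\<in>set ts. reduced x \<Longrightarrow> ts \<noteq> [] \<Longrightarrow> 0 < nls ts"
  by (cases ts) (auto dest: nl_pos)

lemma cluster_app:
  assumes "cluster_property phi B C" "set xs \<subseteq> B" "set ys \<subseteq> C"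
  shows "phi (prod_list (xs @ ys)) = phi (prod_list xs) * phi (prod_list ys)"
  using assms by (simp add: cluster_property_def)

lemma split_weight:
  assumes cl: "cluster_property phi B C"
    and aB: "\<forall>k. 1 \<le> k \<and> k \<le> j \<longrightarrow> a k \<in> B"
    and aC: "\<forall>k. j < k \<and> k < nls (L @ s # R) \<longrightarrow> a k \<in> C"
    and ne: "L \<noteq> []" "R \<noteq> []" and jj: "nls L \<le> j" "j < nls L + num_leaves s"
    and red: "\<forall>x\<in>set (L @ s # R). reduced x"
  shows "Wo phi a (Node (L @ s # R)) = Wo phi a (Node (Node (L @ [s]) # R))"
proof -
  have rL: "\<forall>x\<in>set L. reduced x" and rR: "\<forall>x\<in>set R. reduced x" and rs: "reduced s" using red by auto
  have rX: "reduced (Node (L @ [s]))" using ne rL rs by (cases L) auto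
  have rLs: "\<forall>x\<in>set (L @ [s]). reduced x" using rL rs by auto
  define Bw where "Bw = map a (bnd (L @ [s]))"
  define Cw where "Cw = map a (nls (L @ [s]) # map ((+) (nls (L @ [s]))) (bnd R))"
  have b1: "bnd (L @ s # R) = bnd (L @ [s]) @ nls (L @ [s]) # map ((+) (nls (L @ [s]))) (bnd R)"
    using bnd_app[of "L @ [s]" R] ne by simp
  have b2: "bnd (L @ [s]) = bnd L @ [nls L]" using bnd_app[of L "[s]"] ne by simp
  have b3: "bnd (Node (L @ [s]) # R) = nls (L @ [s]) # map ((+) (nls (L @ [s]))) (bnd R)"
    using ne by simp
  have sB: "set Bw \<subseteq> B"
  proof
    fix y assume "y \<in> set Bw"
    then obtain k where k: "k \<in> set (bnd L) \<or> k = nls L" "y = a k" by (auto simp: Bw_def b2)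
    have "0 < nls L" using nls_pos[OF rL ne(1)] .
    then have "1 \<le> k \<and> k \<le> j" using k bnd_bound[OF rL, of k] jj by auto
    then show "y \<in> B" using aB k by auto
  qed
  have sC: "set Cw \<subseteq> C"
  proof
    fix y assume "y \<in> set Cw"
    then obtain k where k: "k = nls (L @ [s]) \<or> (\<exists>x \<in> set (bnd R). k = nls (L @ [s]) + x)" "y = a k"
      by (auto simp: Cw_def)
    have "0 < nls R" using nls_pos[OF rR ne(2)] .
    then have "j < k \<and> k < nls (L @ s # R)" using k bnd_bound[OF rR] jj by auto
    then show "y \<in> C" using aC k by auto
  qed
  have "Wo phi a (Node (L @ s # R)) = phi (prod_list (Bw @ Cw)) * Wf phi a (L @ s # R)"
    using Wo_Node[OF red] b1 by (simp add: Bw_def Cw_def)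
  also have "\<dots> = phi (prod_list Bw) * phi (prod_list Cw) * (Wf phi a (L @ [s]) * Wf phi (\<lambda>k. a (nls (L @ [s]) + k)) R)"
    using cluster_app[OF cl sB sC] Wf_app[of phi a "L @ [s]" R] by simp
  also have "\<dots> = Wo phi a (Node (Node (L @ [s]) # R))"
    using Wo_Node[OF rLs, of phi a] Wo_Node[of "Node (L @ [s]) # R" phi a] rX rR b3
    by (simp add: Bw_def Cw_def)
  finally show ?thesis .
qed



lemma sw_weight:
  "reduced t \<Longrightarrow> 1 \<le> j \<Longrightarrow> j < num_leaves t \<Longrightarrow> cluster_property phi B C \<Longrightarrow>
   \<forall>k. 1 \<le> k \<and> k \<le> j \<longrightarrow> a k \<in> B \<Longrightarrow> \<forall>k. j < k \<and> k < num_leaves t \<longrightarrow> a k \<in> C \<Longrightarrow>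
   Wo phi a (sw j t) = Wo phi a t"
proof (induction t arbitrary: j a rule: measure_induct_rule[of size])
  case (less t)
  show ?case
  proof (cases t)
    case Leaf then show ?thesis using less.prems by simp
  next
    case (Node ts)
    have jl: "j < nls ts" using less.prems Node by simp
    obtain L s R j' where d: "decL j ts = L" "decS j ts = s" "decR j ts = R" "decJ j ts = j'"
      and sp: "ts = L @ s # R" "j = nls L + j'" "j' < num_leaves s"
      using decomp[OF jl] by blast
    have rts: "length ts \<ge> 2" "\<forall>x\<in>set ts. reduced x" using less.prems Node by auto
    have rs: "reduced s" using rts sp by auto
    have sw: "sw j t = step j ts (sw j' s)" using Node d by (simp add: sw_Node)
    have aC: "\<forall>k. j < k \<and> k < nls ts \<longrightarrow> a k \<in> C" using less.prems Node by simp
    show ?thesis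
    proof (cases "L \<noteq> [] \<and> R \<noteq> []")
      case True
      then have e: "sw j t = Node (Node (L @ [s]) # R)" using sw step_eq[OF d] by simp
      show ?thesis using e Node
        split_weight[OF less.prems(4,5), of L s R] True sp aC rts by simp
    next
      case nm: False
      show ?thesis
      proof (cases "L = [] \<and> R \<noteq> [] \<and> s \<noteq> Leaf \<and> decR j' (kids s) = []")
        case True
        then obtain ss where ss: "s = Node ss" by (cases s) auto
        have jl2: "j' < nls ss" using sp ss by simp
        obtain L2 s2 R2 j2 where d2: "decL j' ss = L2" "decS j' ss = s2" "decR j' ss = R2" "decJ j' ss = j2"
          and sp2: "ss = L2 @ s2 # R2" "j' = nls L2 + j2" "j2 < num_leaves s2"
          using decomp[OF jl2] by blast
        have R2: "R2 = []" using True ss d2 by simp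
        have e: "sw j t = Node (L2 @ s2 # R)" using sw step_eq[OF d] True ss d2 by simp
        have L2: "L2 \<noteq> []" using rs ss sp2 R2 by auto
        have red: "\<forall>x\<in>set (L2 @ s2 # R). reduced x" using rs ss sp2 rts sp by auto
        have "Wo phi a (Node (L2 @ s2 # R)) = Wo phi a (Node (Node (L2 @ [s2]) # R))"
          using split_weight[OF less.prems(4,5), of L2 s2 R] L2 True sp sp2 R2 ss aC red by simp
        then show ?thesis using e Node sp ss sp2 R2 True by simp
      next
        case nmg: False
        show ?thesis
        proof (cases "j' = 0")
          case True
          have "sw j t = Node ts" using sw step_eq[OF d] nm nmg True by auto
          then show ?thesis using Node by simp
        next
          case False
          have e: "sw j t = Node (L @ sw j' s # R)" using sw step_eq[OF d] nm nmg False by simp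
          have "size s < size t" using Node d decS_size[of j ts] by simp
          moreover have "\<forall>k. 1 \<le> k \<and> k \<le> j' \<longrightarrow> a (nls L + k) \<in> B" using less.prems(5) sp by auto
          moreover have "\<forall>k. j' < k \<and> k < num_leaves s \<longrightarrow> a (nls L + k) \<in> C" using aC sp by auto
          ultimately have IH: "Wo phi (\<lambda>k. a (nls L + k)) (sw j' s) = Wo phi (\<lambda>k. a (nls L + k)) s"
            using less.IH[of s j' "\<lambda>k. a (nls L + k)"] rs False sp less.prems(4) by simp
          have B: "reduced (sw j' s) \<and> num_leaves (sw j' s) = num_leaves s"
            using sw_basic[of s j'] rs False sp by simp
          have r2: "\<forall>x\<in>set (L @ sw j' s # R). reduced x" using B rts sp by auto
          have bn: "bnd (L @ sw j' s # R) = bnd (L @ s # R)" using B by (intro bnd_cong) simp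
          have r3: "\<forall>x\<in>set (L @ s # R). reduced x" using rts sp by simp
          have "Wo phi a (sw j t) = Wo phi a (Node (L @ sw j' s # R))" using e by simp
          also have "\<dots> = Wo phi a (Node (L @ s # R))"
            unfolding Wo_Node[OF r2] Wo_Node[OF r3] bn using IH B by (simp add: Wf_app)
          also have "\<dots> = Wo phi a t" using Node sp by simp
          finally show ?thesis .
        qed
      qed
    qed
  qed
qed

lemma sw_shape:
  "reduced (Node ts) \<Longrightarrow> 1 \<le> j \<Longrightarrow> j < nls ts \<Longrightarrow> decR j ts \<noteq> [] \<Longrightarrow>
   \<exists>ts'. sw j (Node ts) = Node ts' \<and> ts' \<noteq> [] \<and> last ts' = last ts"
proof -
  assume r: "reduced (Node ts)" and j: "1 \<le> j" "j < nls ts" and h: "decR j ts \<noteq> []"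
  obtain L s R j' where d: "decL j ts = L" "decS j ts = s" "decR j ts = R" "decJ j ts = j'"
    and sp: "ts = L @ s # R" "j = nls L + j'" "j' < num_leaves s"
    using decomp[OF j(2)] by blast
  have R: "R \<noteq> []" using h d by simp
  have sw: "sw j (Node ts) = step j ts (sw j' s)" using d by (simp add: sw_Node)
  show ?thesis
    unfolding sw step_eq[OF d] using R sp by (auto split: if_splits)
qed

lemma top_hasC:
  assumes "prime_tree (Node ts)" "j < nls ts - 1"
  shows "decR j ts \<noteq> []"
proof
  assume h: "decR j ts = []"
  have jl: "j < nls ts" using assms by simp
  obtain L s R j' where d: "decL j ts = L" "decS j ts = s" "decR j ts = R" "decJ j ts = j'"
    and sp: "ts = L @ s # R" "j = nls L + j'" "j' < num_leaves s"
    using decomp[OF jl] by blast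
  have "last ts = Leaf" using assms(1) by (simp add: prime_tree_def)
  then have "s = Leaf" using sp h d by simp
  then show False using sp h d assms(2) by simp
qed



lemma neg1_pow: "0 < m \<Longrightarrow> 0 < m' \<Longrightarrow> (m' = Suc m \<or> Suc m' = m) \<Longrightarrow>
  ((-1::complex) ^ (m' - 1)) = - ((-1) ^ (m - 1))"
proof -
  assume m: "0 < m" "0 < m'" and h: "m' = Suc m \<or> Suc m' = m"
  then show ?thesis
  proof (cases "m' = Suc m")
    case True
    then have "m' - 1 = Suc (m - 1)" using m by simp
    then show ?thesis by simp
  next
    case False
    then have "m - 1 = Suc (m' - 1)" using m h by simp
    then show ?thesis by simp
  qed
qed

theorem mainTheorem6:
  fixes scale :: "complex \<Rightarrow> 'a::ring_1 \<Rightarrow> 'a" and phi :: "'a \<Rightarrow> complex"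
    and B C :: "'a set" and bs cs :: "'a list"
  assumes "nc_prob_space scale phi"
    and "cluster_property phi B C"
    and "length bs > 0" and "length cs > 0"
    and "set bs \<subseteq> B" and "set cs \<subseteq> C"
  shows "kappa phi (bs @ cs) = 0"
proof -
  note cl = assms(2)
  define as where "as = bs @ cs"
  define n where "n = length as"
  define j where "j = length bs"
  define a where "a = (\<lambda>i. as ! (i - 1))"
  define f where "f t = (-1::complex) ^ (num_internal t - 1) * Wo phi a t" for t
  have j1: "1 \<le> j" using assms(3) unfolding j_def by linarith
  have jn: "j < n" using assms(4) by (simp add: j_def n_def as_def)
  have aB: "\<forall>k. 1 \<le> k \<and> k \<le> j \<longrightarrow> a k \<in> B"
  proof (intro allI impI)
    fix k assume k: "1 \<le> k \<and> k \<le> j"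
    then have kb: "k - 1 < length bs" unfolding j_def by linarith
    then have "a k = bs ! (k - 1)" by (simp add: a_def as_def nth_append)
    moreover have "bs ! (k - 1) \<in> set bs" using kb by (rule nth_mem)
    ultimately show "a k \<in> B" using assms(5) by auto
  qed
  have nlP: "num_leaves t = n + 1" if "t \<in> PST n" for t
    using that by (auto simp: PST_def weight_def prime_tree_def)
  have aC: "\<forall>k. j < k \<and> k < num_leaves t \<longrightarrow> a k \<in> C" if "t \<in> PST n" for t
  proof (intro allI impI)
    fix k assume k: "j < k \<and> k < num_leaves t"
    then have k': "k - 1 - j < length cs" using nlP[OF that] unfolding n_def as_def j_def length_append by linarith
    have kb: "\<not> k - 1 < length bs" using k unfolding j_def by linarith
    have "a k = cs ! (k - 1 - j)" using kb by (simp add: a_def as_def j_def nth_append)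
    moreover have "cs ! (k - 1 - j) \<in> set cs" using k' by (rule nth_mem)
    ultimately show "a k \<in> C" using assms(6) by auto
  qed
  have kap: "kappa phi (bs @ cs) = sum f (PST n)"
    unfolding kappa_def Let_def as_def[symmetric] n_def[symmetric]
  proof (rule sum.cong[OF refl])
    fix t assume t: "t \<in> PST n"
    show "(-1) ^ (num_internal t - 1) *
        (\<Prod>v\<in>internal_vertices t. phi (prod_list (map (\<lambda>i. as ! (i - 1)) (filter (clear_view t v) [1..<n + 1])))) = f t"
      using nlP[OF t] by (simp add: f_def Wo_def a_def)
  qed
  have props: "sw j t \<in> PST n \<and> sw j (sw j t) = t \<and> f (sw j t) = - f t" if t: "t \<in> PST n" for t
  proof -
    have r: "reduced t" and pt: "prime_tree t" using t by (auto simp: PST_def)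
    obtain ts where ts: "t = Node ts" using pt by (cases t) (auto simp: prime_tree_def)
    have nl: "num_leaves t = n + 1" using nlP[OF t] .
    have jl: "j < num_leaves t" using nl jn by simp
    have hc: "decR j ts \<noteq> []" using top_hasC[of ts j] pt ts nl jn by simp
    have bas: "reduced (sw j t) \<and> num_leaves (sw j t) = num_leaves t" using sw_basic[OF r j1 jl] by simp
    obtain ts' where ts': "sw j t = Node ts'" "ts' \<noteq> []" "last ts' = last ts"
      using sw_shape[of ts j] r ts j1 jl hc by auto
    have "prime_tree (sw j t)" using pt ts ts' bas by (simp add: prime_tree_def)
    then have P1: "sw j t \<in> PST n" using bas t by (simp add: PST_def weight_def)
    have P2: "sw j (sw j t) = t" using sw_invol[OF r j1 jl] .
    have W: "Wo phi a (sw j t) = Wo phi a t" using sw_weight[OF r j1 jl cl aB aC[OF t]] .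
    have S: "num_internal (sw j t) = Suc (num_internal t) \<or> Suc (num_internal (sw j t)) = num_internal t"
      using sw_sign[OF r j1 jl] hc ts by simp
    have "0 < num_internal t" "0 < num_internal (sw j t)" using ts ts' by simp_all
    then have "f (sw j t) = - f t" using neg1_pow[OF _ _ S] W by (simp add: f_def)
    then show ?thesis using P1 P2 by simp
  qed
  have "sum f (PST n) = sum (\<lambda>t. - f t) (PST n)"
    by (rule sum.reindex_bij_witness[of _ "sw j" "sw j"]) (use props in auto)
  then have "sum f (PST n) = - sum f (PST n)" by (simp add: sum_negf)
  then have "sum f (PST n) = 0" by simp
  then show ?thesis using kap by simp
qed

end
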